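(* Let $R>1$ and fix $(t_0,x_0)$ with $t_0\ge0$, $t_0+|x_0|\le R$. For $0\le\tilde r\le t_0$ let $t=t_0-\tilde r$, and for $\tilde\omega\in\mathbb{S}^2$ let $x=x_0+\tilde r\tilde\omega$, $r=|x|$, $\omega=x/r$, $\tau=\omega\cdot\tilde\omega$, $u_*=R-t+r$, $v_*=R-t-r$. Then for $0<\gamma<1$ and $0\le\alpha<1$, \[ \int_{\mathbb{S}^2}\big((1-\tau)u_*^{\gamma}+v_*^{\gamma}\big)^{-\alpha}\,d\tilde\omega\le C(R-t_0)^{-\alpha\gamma} \] for some constant $C$ depending only on $\gamma$, $\alpha$ and $R$. *)

theory Defs
  imports "HOL-Analysis.Analysis"
begin

definition sph :: "real \<Rightarrow> real \<Rightarrow> real^3" where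
  "sph \<theta> \<phi> = vector [sin \<theta> * cos \<phi>, sin \<theta> * sin \<phi>, cos \<theta>]"

text \<open>Standard surface (area) measure on S^2: push-forward of
  sin(theta) d(theta) d(phi) on [0,pi] x [0,2pi] under the spherical parametrisation.\<close>
definition S2_measure :: "(real^3) measure" where
  "S2_measure = distr
     (density (lborel \<Otimes>\<^sub>M lborel)
        (\<lambda>p. indicator ({0..pi} \<times> {0..2*pi}) p * ennreal (sin (fst p))))
     borel (\<lambda>p. sph (fst p) (snd p))"

end

theory Submission
  imports Defs
begin

definition Hp :: "real \<Rightarrow> real \<Rightarrow> ennreal" where
  "Hp p y = (if y = 0 then \<infinity> else ennreal (\<bar>y\<bar> powr (-p)))"

lemma Hp_measurable[measurable]: "Hp p \<in> borel_measurable borel"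
  unfolding Hp_def by measurable

lemma Hp_pos: "Hp p y > 0"
  unfolding Hp_def by auto

lemma Hp_minus: "Hp p (-y) = Hp p y"
  unfolding Hp_def by auto

lemma half_int:
  assumes "0 \<le> p" "p < 1" "0 \<le> M"
  shows "(\<integral>\<^sup>+ y. ennreal (indicator {0..M} y * y powr (-p)) \<partial>lborel) = ennreal (M powr (1-p) / (1-p))"
proof -
  have "((\<lambda>x. x powr (-p)) has_integral (M powr (-p+1) / (-p+1))) {0..M}"
    by (rule has_integral_powr_from_0) (use assms in auto)
  from nn_integral_has_integral_lebesgue[OF _ this]
  show ?thesis by (simp add: add.commute)
qed

lemma sym_int:
  assumes "0 \<le> p" "p < 1" "0 \<le> M"
  shows "(\<integral>\<^sup>+ y. indicator {-M..M} y * Hp p y \<partial>lborel) \<le> ennreal (2 * (M powr (1-p) / (1-p)))"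
proof -
  have "(\<integral>\<^sup>+ y. indicator {-M..M} y * Hp p y \<partial>lborel) \<le>
     (\<integral>\<^sup>+ y. ennreal (indicator {0..M} y * y powr (-p)) + ennreal (indicator {0..M} (-y) * (-y) powr (-p)) \<partial>lborel)"
  proof (rule nn_integral_mono_AE)
    show "AE y in lborel. indicator {-M..M} y * Hp p y \<le> ennreal (indicator {0..M} y * y powr (-p)) + ennreal (indicator {0..M} (-y) * (-y) powr (-p))"
      using AE_lborel_singleton[of "0::real"]
    proof eventually_elim
      case (elim y)
      show ?case
      proof (cases "y > 0")
        case True
        then show ?thesis by (auto simp: Hp_def indicator_def)
      next
        case False
        then have "y < 0" using elim by auto
        then show ?thesis by (auto simp: Hp_def indicator_def)
      qed
    qed
  qed
  also have "\<dots> = (\<integral>\<^sup>+ y. ennreal (indicator {0..M} y * y powr (-p)) \<partial>lborel) + (\<integral>\<^sup>+ y. ennreal (indicator {0..M} (-y) * (-y) powr (-p)) \<partial>lborel)"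
    by (rule nn_integral_add) auto
  also have "(\<integral>\<^sup>+ y. ennreal (indicator {0..M} (-y) * (-y) powr (-p)) \<partial>lborel) = (\<integral>\<^sup>+ y. ennreal (indicator {0..M} y * y powr (-p)) \<partial>lborel)"
    using nn_integral_real_affine[of "\<lambda>y. ennreal (indicator {0..M} y * y powr (-p))" "-1" 0]
    by simp
  also have "(\<integral>\<^sup>+ y. ennreal (indicator {0..M} y * y powr (-p)) \<partial>lborel) = ennreal (M powr (1-p) / (1-p))"
    by (rule half_int[OF assms])
  finally have le: "(\<integral>\<^sup>+ y. indicator {-M..M} y * Hp p y \<partial>lborel) \<le> ennreal (M powr (1-p) / (1-p)) + ennreal (M powr (1-p) / (1-p))" .
  have "ennreal (M powr (1-p) / (1-p)) + ennreal (M powr (1-p) / (1-p)) = ennreal (2 * (M powr (1-p) / (1-p)))"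
    using assms by (subst ennreal_plus[symmetric]) auto
  with le show ?thesis by simp
qed

lemma shift_int:
  assumes "0 \<le> p" "p < 1" "0 \<le> M"
  shows "(\<integral>\<^sup>+ y. indicator {c-M..c+M} y * Hp p (y - c) \<partial>lborel) \<le> ennreal (2 * (M powr (1-p) / (1-p)))"
proof -
  have "(\<integral>\<^sup>+ y. indicator {c-M..c+M} y * Hp p (y - c) \<partial>lborel) = (\<integral>\<^sup>+ y. indicator {c-M..c+M} (c + y) * Hp p (c + y - c) \<partial>lborel)"
    using nn_integral_real_affine[of "\<lambda>y. indicator {c-M..c+M} y * Hp p (y - c)" 1 c] by simp
  also have "\<dots> = (\<integral>\<^sup>+ y. indicator {-M..M} y * Hp p y \<partial>lborel)"
    by (intro nn_integral_cong) (auto simp: indicator_def)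
  finally show ?thesis using sym_int[OF assms] by simp
qed

lemma interval_int:
  assumes "0 \<le> p" "p < 1" "0 \<le> M" "c - M \<le> a" "b \<le> c + M"
  shows "(\<integral>\<^sup>+ y. indicator {a..b} y * Hp p (y - c) \<partial>lborel) \<le> ennreal (2 * (M powr (1-p) / (1-p)))"
proof -
  have "(\<integral>\<^sup>+ y. indicator {a..b} y * Hp p (y - c) \<partial>lborel) \<le> (\<integral>\<^sup>+ y. indicator {c-M..c+M} y * Hp p (y - c) \<partial>lborel)"
    by (intro nn_integral_mono) (use assms in \<open>auto simp: indicator_def\<close>)
  then show ?thesis using shift_int[OF assms(1-3), of c] by simp
qed

lemma sph_inner: "sph a b \<bullet> sph t f = sin a * sin t * cos (f - b) + cos a * cos t"
  unfolding sph_def inner_vec_def by (simp add: sum_3 vector_3 cos_diff algebra_simps)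

lemma sph_norm: "norm (sph t f) = 1"
proof -
  have "sph t f \<bullet> sph t f = 1"
    unfolding sph_inner by (simp add: power2_eq_square[symmetric])
  then show ?thesis by (simp add: norm_eq_sqrt_inner)
qed

lemma cos_lb:
  fixes y :: real
  assumes "\<bar>y\<bar> \<le> pi"
  shows "y^2 / 8 \<le> 1 - cos y"
proof -
  define z where "z = \<bar>y\<bar> / 2"
  have z0: "0 \<le> z" and zpi: "z \<le> pi / 2" using assms by (auto simp: z_def)
  have "pi \<le> 3.2" using pi_approx by simp
  then have z2: "z^2 \<le> 3"
  proof -
    have "z^2 \<le> (16/10)^2" using z0 zpi \<open>pi \<le> 3.2\<close> by (intro power_mono) auto
    moreover have "(16/10::real)^2 \<le> 3" by (simp add: power2_eq_square)
    ultimately show ?thesis by linarith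
  qed
  have "\<bar>sin z - (\<Sum>m<3. sin_coeff m * z ^ m)\<bar> \<le> inverse (fact 3) * \<bar>z\<bar> ^ 3"
    by (rule Maclaurin_sin_bound)
  then have "\<bar>sin z - z\<bar> \<le> z^3 / 6"
    using z0 by (simp add: sin_coeff_def eval_nat_numeral fact_numeral)
  then have "sin z \<ge> z - z^3/6" by linarith
  moreover have "z^3 / 6 \<le> z / 2"
  proof -
    have "z^3 = z * z^2" by (simp add: power3_eq_cube power2_eq_square)
    also have "\<dots> \<le> z * 3" using z0 z2 by (intro mult_left_mono) auto
    finally show ?thesis by simp
  qed
  ultimately have sz: "sin z \<ge> z / 2" by linarith
  have "sin z ^ 2 \<ge> (z/2)^2"
    using sz z0 by (intro power_mono) auto
  moreover have "sin (y/2) ^ 2 = sin z ^ 2"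
    by (cases "y \<ge> 0") (auto simp: z_def)
  moreover have "cos y = 1 - 2 * sin (y/2) ^ 2"
    using cos_double_sin[of "y/2"] by simp
  moreover have "(z/2)^2 = y^2 / 16"
    by (simp add: z_def power_divide)
  ultimately show ?thesis by linarith
qed

lemma sin_lip: "\<bar>sin (a::real) - sin b\<bar> \<le> \<bar>a - b\<bar>"
proof -
  have "\<bar>sin a - sin b\<bar> = 2 * \<bar>sin ((a - b) / 2)\<bar> * \<bar>cos ((a + b) / 2)\<bar>"
    by (simp add: sin_diff_sin abs_mult)
  also have "\<dots> \<le> 2 * \<bar>(a - b) / 2\<bar> * 1"
    using abs_sin_x_le_abs_x[of "(a-b)/2"] abs_cos_le_one[of "(a+b)/2"]
    by (intro mult_mono) auto
  also have "\<dots> = \<bar>a - b\<bar>" by simp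
  finally show ?thesis .
qed

lemma unit_sph:
  fixes e :: "real^3"
  assumes "norm e = 1"
  obtains a b where "0 \<le> a" "a \<le> pi" "0 \<le> b" "b < 2*pi" "e = sph a b"
proof -
  have n: "(e$1)^2 + (e$2)^2 + (e$3)^2 = 1"
    using assms unfolding norm_eq_sqrt_inner inner_vec_def
    by (simp add: sum_3 power2_eq_square)
  define a where "a = arccos (e$3)"
  have "(e$3)^2 \<le> 1" using n zero_le_power2[of "e$1"] zero_le_power2[of "e$2"] by linarith
  then have "(e$3)^2 \<le> 1^2" by simp
  then have "\<bar>e$3\<bar> \<le> 1" using abs_le_square_iff[of "e$3" 1] by simp
  then have e3: "-1 \<le> e$3" "e$3 \<le> 1" by auto
  have a: "0 \<le> a" "a \<le> pi" "cos a = e$3" using arccos_bounded e3 by (auto simp: a_def)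
  have sa: "sin a = sqrt ((e$1)^2 + (e$2)^2)"
    using sin_arccos_abs[of "e$3"] e3 n unfolding a_def
    by (metis abs_le_iff add_diff_cancel_right' diff_add_eq eq_diff_eq minus_le_iff)
  show ?thesis
  proof (cases "sin a = 0")
    case True
    then have "(e$1)^2 + (e$2)^2 = 0" using sa by simp
    then have "e$1 = 0" "e$2 = 0" by (simp_all add: sum_power2_eq_zero_iff)
    then have "e = sph a 0" using a True unfolding sph_def
      by (simp add: vec_eq_iff forall_3 vector_3)
    then show ?thesis using that[of a 0] a by auto
  next
    case False
    have "sin a \<ge> 0" using sa by simp
    then have sp: "sin a > 0" using False by linarith
    have sq: "(sin a)^2 = (e$1)^2 + (e$2)^2" using sa by simp
    have "(e$1 / sin a)^2 + (e$2 / sin a)^2 = ((e$1)^2 + (e$2)^2) / (sin a)^2"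
      by (simp add: power_divide add_divide_distrib)
    also have "\<dots> = 1" by (subst sq[symmetric]) (use sp in simp)
    finally have "(e$1 / sin a)^2 + (e$2 / sin a)^2 = 1" .
    then obtain b where b: "0 \<le> b" "b < 2*pi" "e$1 / sin a = cos b" "e$2 / sin a = sin b"
      by (rule sincos_total_2pi)
    have "e = sph a b" using a b sp unfolding sph_def
      by (simp add: vec_eq_iff forall_3 vector_3 field_simps)
    then show ?thesis using that[of a b] a b by auto
  qed
qed


lemma core:
  fixes p d P s S X Y :: real
  assumes p: "0 \<le> p" "p < 1" and d: "0 < d" "d \<le> pi" and P: "0 < P" "P \<le> pi"
    and s: "0 \<le> s" "s \<le> 1" "s \<le> S + d" and S: "0 \<le> S"
    and X: "d^2/8 \<le> X" and Y: "s*S*P^2/8 \<le> Y" "0 \<le> Y"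
  shows "s * (X+Y) powr (-p) \<le> 256 * (d powr (-p) * P powr (-p))"
proof -
  have pi4: "pi \<le> 4" using pi_less_4 by simp
  have P4: "P powr (-p) \<ge> 1/4"
  proof -
    have "4 powr p \<le> 4 powr 1" using p by (intro powr_mono) auto
    then have "4 powr (-p) \<ge> 1/4" by (simp add: powr_minus divide_simps)
    moreover have "P powr (-p) \<ge> 4 powr (-p)"
      using P pi4 p by (intro powr_mono2') auto
    ultimately show ?thesis by linarith
  qed
  have dp: "d powr (-p) > 0" using d by simp
  have "d^2/8 > 0" using d by simp
  then have X0: "X > 0" using X by linarith
  show ?thesis
  proof (cases "s \<le> 2*d")
    case True
    have "(X+Y) powr (-p) \<le> (d^2/8) powr (-p)"
      using X Y d p by (intro powr_mono2') auto
    also have "\<dots> = d powr (-2*p) * 8 powr p"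
    proof -
      have "d^2 = d powr 2" using d by (simp add: powr_numeral)
      then have "(d^2/8) powr (-p) = (d powr 2) powr (-p) / 8 powr (-p)"
        by (simp add: powr_divide)
      also have "\<dots> = d powr (-2*p) * 8 powr p"
        by (simp add: powr_powr powr_minus divide_inverse)
      finally show ?thesis .
    qed
    finally have A: "(X+Y) powr (-p) \<le> d powr (-2*p) * 8 powr p" .
    have "s * (X+Y) powr (-p) \<le> (2*d) * (d powr (-2*p) * 8 powr p)"
      using True A s by (intro mult_mono) auto
    also have "\<dots> = 2 * (d powr (1-p)) * d powr (-p) * 8 powr p"
    proof -
      have e1: "d powr (1-p) * d powr (-p) = d powr (1 + (-2*p))"
        by (subst powr_add[symmetric]) (simp add: algebra_simps)
      have e2: "d powr (1 + (-2*p)) = d * d powr (-2*p)"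
        using d by (subst powr_add) simp
      have "(2*d) * (d powr (-2*p) * 8 powr p) = 2 * (d * d powr (-2*p)) * 8 powr p" by (simp add: mult.assoc)
      also have "\<dots> = 2 * (d powr (1-p) * d powr (-p)) * 8 powr p" using e1 e2 by simp
      also have "\<dots> = 2 * d powr (1-p) * d powr (-p) * 8 powr p" by (simp add: mult.assoc)
      finally show ?thesis .
    qed
    also have "\<dots> \<le> 2 * 4 * d powr (-p) * 8"
    proof -
      have "d powr (1-p) \<le> 4 powr (1-p)" using d pi4 p by (intro powr_mono2) auto
      also have "\<dots> \<le> 4 powr 1" using p by (intro powr_mono) auto
      finally have a: "d powr (1-p) \<le> 4" by simp
      have b: "8 powr p \<le> 8" using powr_mono[of p 1 8] p by simp
      show ?thesis using a b dp
        by (intro mult_mono) auto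
    qed
    also have "\<dots> \<le> 256 * (d powr (-p) * P powr (-p))"
    proof -
      have "d powr (-p) * (1/4) \<le> d powr (-p) * P powr (-p)" using P4 dp by (intro mult_left_mono) auto
      then show ?thesis by (simp add: ac_simps)
    qed
    finally show ?thesis .
  next
    case False
    then have s0: "s > 0" using d by simp
    have SS: "S \<ge> s/2" using False s by simp
    have Y2: "Y \<ge> s^2*P^2/16"
    proof -
      have "s*(s/2)*P^2/8 \<le> s*S*P^2/8"
        using SS s by (intro divide_right_mono mult_right_mono mult_left_mono) auto
      moreover have "s*(s/2)*P^2/8 = s^2*P^2/16" by (simp add: power2_eq_square)
      ultimately show ?thesis using Y by linarith
    qed
    have "(X+Y)^2 - 4*X*Y = (X-Y)^2" by (simp add: power2_eq_square algebra_simps)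
    then have XY: "(X+Y)^2 \<ge> 4*X*Y" using zero_le_power2[of "X-Y"] by linarith
    have "4*X*Y \<ge> 4*(d^2/8)*(s^2*P^2/16)"
      using X Y2 X0 by (intro mult_mono) auto
    moreover have "4*(d^2/8)*(s^2*P^2/16) \<ge> (d * s * P/6)^2"
      by (simp add: power_mult_distrib power_divide) 
    ultimately have "(X+Y)^2 \<ge> (d * s * P/6)^2" using XY by linarith
    then have XY2: "X + Y \<ge> d * s * P/6"
      using X0 Y by (meson abs_le_square_iff abs_of_nonneg add_nonneg_nonneg less_imp_le power2_le_imp_le)
    have pos: "d * s * P/6 > 0" using d s0 P by simp
    have "(X+Y) powr (-p) \<le> (d * s * P/6) powr (-p)"
      using XY2 pos p by (intro powr_mono2') auto
    also have "\<dots> = d powr (-p) * s powr (-p) * P powr (-p) * 6 powr p"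
      using d s0 P by (simp add: powr_divide powr_mult powr_minus divide_simps)
    finally have A: "(X+Y) powr (-p) \<le> d powr (-p) * s powr (-p) * P powr (-p) * 6 powr p" .
    have "s * (X+Y) powr (-p) \<le> s * (d powr (-p) * s powr (-p) * P powr (-p) * 6 powr p)"
      using A s by (intro mult_left_mono) auto
    also have "\<dots> = s powr (1-p) * (d powr (-p) * P powr (-p) * 6 powr p)"
      using s0 by (simp add: powr_diff powr_minus divide_simps)
    also have "\<dots> \<le> 1 * (d powr (-p) * P powr (-p) * 6)"
    proof (rule mult_mono)
      show "s powr (1-p) \<le> 1" using s p by (intro powr_le1) auto
      show "d powr (-p) * P powr (-p) * 6 powr p \<le> d powr (-p) * P powr (-p) * 6"
        using powr_mono[of p 1 6] p by (intro mult_left_mono) auto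
    qed auto
    also have "\<dots> \<le> 256 * (d powr (-p) * P powr (-p))" using dp P by simp
    finally show ?thesis .
  qed
qed


definition J :: "real \<Rightarrow> real^3 \<Rightarrow> real^3 \<Rightarrow> ennreal" where
  "J p e w = (if 1 - e \<bullet> w \<le> 0 then \<infinity> else ennreal ((1 - e \<bullet> w) powr (-p)))"

lemma J_meas[measurable]: "J p e \<in> borel_measurable borel"
  unfolding J_def by measurable

lemma sph_alt: "sph t f = (sin t * cos f) *\<^sub>R axis 1 1 + (sin t * sin f) *\<^sub>R axis 2 1 + cos t *\<^sub>R axis 3 1"
  unfolding sph_def by (simp add: vec_eq_iff forall_3 axis_def vector_3)

lemma sph_meas[measurable]: "(\<lambda>q. sph (fst q) (snd q)) \<in> borel_measurable (lborel \<Otimes>\<^sub>M lborel)"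
  unfolding sph_alt by measurable

lemma ennreal_le3: "(x::ennreal) \<le> x + y + z" "(y::ennreal) \<le> x + y + z" "(z::ennreal) \<le> x + y + z"
  by (simp_all add: add_increasing add_increasing2)

lemma Hp_abs: "Hp p \<bar>y\<bar> = Hp p y" unfolding Hp_def by auto

lemma pw:
  assumes p: "0 \<le> p" "p < 1" and a: "0 \<le> a" "a \<le> pi" and b: "0 \<le> b" "b \<le> 2*pi"
  shows "indicator ({0..pi} \<times> {0..2*pi}) (t,f) * ennreal (sin t) * J p (sph a b) (sph t f)
     \<le> ennreal 256 * (indicator {0..pi} t * Hp p (t - a)) *
        (indicator {0..2*pi} f * (Hp p (f - b) + Hp p (f - (b + 2*pi)) + Hp p (f - (b - 2*pi))))"
proof (cases "t \<in> {0..pi} \<and> f \<in> {0..2*pi}")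
  case False
  then show ?thesis by (auto simp: indicator_def)
next
  case True
  then have t: "0 \<le> t" "t \<le> pi" and f: "0 \<le> f" "f \<le> 2*pi" by auto
  define E where "E = Hp p (f - b) + Hp p (f - (b + 2*pi)) + Hp p (f - (b - 2*pi))"
  define \<psi> where "\<psi> = f - b"
  define P where "P = (if \<bar>\<psi>\<bar> \<le> pi then \<bar>\<psi>\<bar> else 2*pi - \<bar>\<psi>\<bar>)"
  have psi2: "\<bar>\<psi>\<bar> \<le> 2*pi" using f b by (auto simp: \<psi>_def)
  have P0: "0 \<le> P" "P \<le> pi" using psi2 by (auto simp: P_def)
  have cosP: "cos \<psi> = cos P"
  proof (cases "\<bar>\<psi>\<bar> \<le> pi")
    case True
    then show ?thesis by (simp add: P_def cos_abs_real)
  next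
    case False
    then have "cos P = cos (2*pi - \<bar>\<psi>\<bar>)" by (simp add: P_def)
    also have "\<dots> = cos \<bar>\<psi>\<bar>" by (simp add: cos_diff)
    finally show ?thesis by (simp add: cos_abs_real)
  qed
  have Pl: "P^2/8 \<le> 1 - cos \<psi>" unfolding cosP using P0 by (intro cos_lb) auto
  have HE: "Hp p P \<le> E"
  proof -
    consider "\<bar>\<psi>\<bar> \<le> pi" | "\<psi> > pi" | "\<psi> < -pi" by linarith
    then show ?thesis
    proof cases
      case 1
      then have "Hp p P = Hp p (f - b)" by (auto simp: P_def \<psi>_def Hp_def)
      then show ?thesis unfolding E_def using ennreal_le3 by simp
    next
      case 2
      have "0 < \<psi>" using 2 pi_gt_zero by linarith
      with 2 have "\<bar>P\<bar> = \<bar>f - (b + 2*pi)\<bar>" unfolding P_def \<psi>_def by (auto simp: abs_if)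
      then have "Hp p P = Hp p (f - (b + 2*pi))" by (metis Hp_abs)
      then show ?thesis unfolding E_def using ennreal_le3 by simp
    next
      case 3
      have "\<psi> < 0" using 3 pi_gt_zero by linarith
      with 3 have "\<bar>P\<bar> = \<bar>f - (b - 2*pi)\<bar>" unfolding P_def \<psi>_def by (auto simp: abs_if)
      then have "Hp p P = Hp p (f - (b - 2*pi))" by (metis Hp_abs)
      then show ?thesis unfolding E_def using ennreal_le3 by simp
    qed
  qed
  have Epos: "E > 0" using Hp_pos[of p "f - b"] ennreal_le3(1)[of "Hp p (f - b)"] unfolding E_def
    by (metis order_less_le_trans)
  have Q: "1 - sph a b \<bullet> sph t f = (1 - cos (t - a)) + sin t * sin a * (1 - cos \<psi>)"
    unfolding sph_inner \<psi>_def by (simp add: cos_diff algebra_simps)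
  have LHS: "indicator ({0..pi} \<times> {0..2*pi}) (t,f) * ennreal (sin t) * J p (sph a b) (sph t f)
     = ennreal (sin t) * J p (sph a b) (sph t f)" using True by (simp add: indicator_def)
  have RHS: "ennreal 256 * (indicator {0..pi} t * Hp p (t - a)) *
        (indicator {0..2*pi} f * (Hp p (f - b) + Hp p (f - (b + 2*pi)) + Hp p (f - (b - 2*pi))))
      = ennreal 256 * Hp p (t - a) * E" using True by (simp add: indicator_def E_def)
  show ?thesis
  proof (cases "t = a \<or> P = 0")
    case True
    have "ennreal 256 * Hp p (t - a) * E = \<infinity>"
    proof (cases "t = a")
      case True
      then show ?thesis using Epos by (simp add: Hp_def ennreal_mult_eq_top_iff)
    next
      case False
      with \<open>t = a \<or> P = 0\<close> have "P = 0" by simp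
      then have "E = \<infinity>" using HE by (simp add: Hp_def top_unique)
      then show ?thesis using Hp_pos[of p "t - a"] by (simp add: ennreal_mult_eq_top_iff)
    qed
    then show ?thesis unfolding LHS RHS by simp
  next
    case False
    define d where "d = \<bar>t - a\<bar>"
    have d: "0 < d" "d \<le> pi" using False t a by (auto simp: d_def)
    have P: "0 < P" "P \<le> pi" using False P0 by auto
    have X: "d^2/8 \<le> 1 - cos (t - a)"
      using cos_lb[of "t - a"] t a by (simp add: d_def)
    have sa: "0 \<le> sin a" using a by (simp add: sin_ge_zero)
    have st: "0 \<le> sin t" "sin t \<le> 1" using t by (auto simp: sin_ge_zero)
    have Y: "sin t * sin a * P^2/8 \<le> sin t * sin a * (1 - cos \<psi>)"
    proof -
      have "sin t * sin a * (P^2/8) \<le> sin t * sin a * (1 - cos \<psi>)" using Pl sa st by (intro mult_left_mono) auto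
      then show ?thesis by simp
    qed
    have Y0: "0 \<le> sin t * sin a * (1 - cos \<psi>)" using sa st by simp
    have slip: "sin t \<le> sin a + d" using sin_lip[of t a] by (simp add: d_def)
    have core': "sin t * ((1 - cos (t - a)) + sin t * sin a * (1 - cos \<psi>)) powr (-p)
        \<le> 256 * (d powr (-p) * P powr (-p))"
      by (rule core[OF p d P st slip sa X Y Y0])
    have Qpos: "1 - sph a b \<bullet> sph t f > 0"
      unfolding Q using X Y0 d by (smt (verit) zero_less_power divide_pos_pos)
    have "ennreal (sin t) * J p (sph a b) (sph t f) = ennreal (sin t * (1 - sph a b \<bullet> sph t f) powr (-p))"
      using Qpos st by (simp add: J_def ennreal_mult)
    also have "\<dots> \<le> ennreal (256 * (d powr (-p) * P powr (-p)))"
      using core' unfolding Q by (intro ennreal_leI)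
    also have "\<dots> = ennreal 256 * Hp p (t - a) * Hp p P"
      using False P by (simp add: Hp_def d_def ennreal_mult mult.assoc)
    also have "\<dots> \<le> ennreal 256 * Hp p (t - a) * E"
      using HE by (intro mult_left_mono) auto
    finally show ?thesis unfolding LHS RHS .
  qed
qed


lemma sphere_int:
  assumes p: "0 \<le> p" "p < 1" and e: "norm e = 1"
  shows "(\<integral>\<^sup>+w. J p e w \<partial>S2_measure)
     \<le> ennreal (256 * (2 * (pi powr (1-p) / (1-p))) * (3 * (2 * ((4*pi) powr (1-p) / (1-p)))))"
proof -
  obtain a b where a: "0 \<le> a" "a \<le> pi" and b: "0 \<le> b" "b < 2*pi" and eab: "e = sph a b"
    using unit_sph[OF e] by blast
  define g where "g = (\<lambda>q::real\<times>real. indicator ({0..pi} \<times> {0..2*pi}) q * ennreal (sin (fst q)))"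
  define D where "D = (\<lambda>t. indicator {0..pi} t * Hp p (t - a))"
  define E where "E = (\<lambda>f. indicator {0..2*pi} f * (Hp p (f - b) + Hp p (f - (b + 2*pi)) + Hp p (f - (b - 2*pi))))"
  have gm[measurable]: "g \<in> borel_measurable (lborel \<Otimes>\<^sub>M lborel)" unfolding g_def by measurable
  have Dm[measurable]: "D \<in> borel_measurable lborel" unfolding D_def by measurable
  have Em[measurable]: "E \<in> borel_measurable lborel" unfolding E_def by measurable
  define K1 where "K1 = 2 * (pi powr (1-p) / (1-p))"
  define K2 where "K2 = 2 * ((4*pi) powr (1-p) / (1-p))"
  have K1: "0 \<le> K1" and K2: "0 \<le> K2" using p by (auto simp: K1_def K2_def)
  have "(\<integral>\<^sup>+w. J p e w \<partial>S2_measure) = (\<integral>\<^sup>+q. J p e (sph (fst q) (snd q)) \<partial>density (lborel \<Otimes>\<^sub>M lborel) g)"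
    unfolding S2_measure_def g_def by (subst nn_integral_distr) auto
  also have "\<dots> = (\<integral>\<^sup>+q. g q * J p e (sph (fst q) (snd q)) \<partial>(lborel \<Otimes>\<^sub>M lborel))"
    by (subst nn_integral_density) auto
  also have "\<dots> \<le> (\<integral>\<^sup>+q. ennreal 256 * D (fst q) * E (snd q) \<partial>(lborel \<Otimes>\<^sub>M lborel))"
  proof (intro nn_integral_mono)
    fix q :: "real \<times> real"
    obtain t f where q: "q = (t, f)" by (cases q)
    show "g q * J p e (sph (fst q) (snd q)) \<le> ennreal 256 * D (fst q) * E (snd q)"
      unfolding q g_def D_def E_def eab using pw[OF p a, of b t f] b
      by (simp add: mult.assoc)
  qed
  also have "\<dots> = (\<integral>\<^sup>+t. \<integral>\<^sup>+f. ennreal 256 * D t * E f \<partial>lborel \<partial>lborel)"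
    using lborel.nn_integral_fst[of "\<lambda>q. ennreal 256 * D (fst q) * E (snd q)" lborel] by simp
  also have "\<dots> = (\<integral>\<^sup>+t. ennreal 256 * D t * (\<integral>\<^sup>+f. E f \<partial>lborel) \<partial>lborel)"
    by (simp add: nn_integral_cmult)
  also have "\<dots> = ennreal 256 * (\<integral>\<^sup>+t. D t \<partial>lborel) * (\<integral>\<^sup>+f. E f \<partial>lborel)"
    by (simp add: nn_integral_cmult nn_integral_multc mult.assoc)
  also have "\<dots> \<le> ennreal 256 * ennreal K1 * ennreal (3 * K2)"
  proof (intro mult_mono)
    show "(\<integral>\<^sup>+t. D t \<partial>lborel) \<le> ennreal K1"
      unfolding D_def K1_def using a by (intro interval_int p) auto
    have "(\<integral>\<^sup>+f. E f \<partial>lborel) = (\<integral>\<^sup>+f. indicator {0..2*pi} f * Hp p (f - b) \<partial>lborel)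
       + (\<integral>\<^sup>+f. indicator {0..2*pi} f * Hp p (f - (b + 2*pi)) \<partial>lborel)
       + (\<integral>\<^sup>+f. indicator {0..2*pi} f * Hp p (f - (b - 2*pi)) \<partial>lborel)"
      unfolding E_def distrib_left by (simp add: nn_integral_add)
    also have "\<dots> \<le> ennreal K2 + ennreal K2 + ennreal K2"
      unfolding K2_def using b pi_gt_zero by (intro add_mono interval_int p) auto
    also have "\<dots> = ennreal (3 * K2)" using K2 by (simp flip: ennreal_plus)
    finally show "(\<integral>\<^sup>+f. E f \<partial>lborel) \<le> ennreal (3 * K2)" .
  qed auto
  also have "\<dots> = ennreal (256 * K1 * (3 * K2))"
  proof -
    have "ennreal (256 * K1 * (3 * K2)) = ennreal (256 * K1) * ennreal (3 * K2)"
      using K1 K2 by (intro ennreal_mult) auto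
    moreover have "ennreal (256 * K1) = ennreal 256 * ennreal K1" using K1 by (intro ennreal_mult) auto
    ultimately show ?thesis by simp
  qed
  finally show ?thesis unfolding K1_def K2_def .
qed


lemma main_real:
  fixes a s \<rho> c m \<tau> \<gamma> \<alpha> :: real
  assumes g: "0 < \<gamma>" "\<gamma> < 1" and al: "0 \<le> \<alpha>" "\<alpha> < 1" and a: "0 < a"
    and rho: "0 \<le> \<rho>" "\<rho> \<le> a" and s: "0 \<le> s" and c: "-1 < c" "c < 1"
    and m: "0 \<le> m" "m \<le> \<rho> + s" "m^2 = \<rho>^2 + 2* s*\<rho>*c + s^2" "\<rho> - s \<le> m"
    and tau: "\<tau> = (1/m) * (\<rho>*c + s)"
  shows "((1-\<tau>)*(a+s+m) powr \<gamma> + (a+s-m) powr \<gamma>) powr (-\<alpha>)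
     \<le> a powr (-\<alpha>*\<gamma>) * (2*(1-c) powr (-\<alpha>*\<gamma>) + 8*(1-c) powr (-\<alpha>) + 8*(1+c) powr (-\<alpha>))"
    (is "?F \<le> ?T")
proof -
  define q where "q = \<rho>*c + s"
  have mq: "m^2 - q^2 = \<rho>^2 * (1 - c^2)"
    unfolding q_def m(3) by (simp add: power2_eq_square algebra_simps)
  have c2: "1 - c^2 > 0" using c by (simp add: abs_square_less_1)
  have "0 \<le> \<rho>^2 * (1 - c^2)" using c2 by simp
  then have "q^2 \<le> m^2" using mq by linarith
  then have "\<bar>q\<bar> \<le> \<bar>m\<bar>" by (simp add: abs_le_square_iff)
  then have qm: "q \<le> m" using m(1) by linarith
  have tau1: "\<tau> \<le> 1"
  proof (cases "m = 0")
    case True then show ?thesis using tau by simp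
  next
    case False then have "m > 0" using m by simp
    then show ?thesis using tau qm unfolding q_def by (simp add: divide_le_eq_1)
  qed
  have vs0: "0 \<le> a + s - m" using m rho by linarith
  have us0: "a \<le> a + s + m" using m s by linarith
  have apos: "a powr (-\<alpha>*\<gamma>) > 0" using a by simp
  have T0: "0 \<le> 2*(1-c) powr (-\<alpha>*\<gamma>) + 8*(1-c) powr (-\<alpha>) + 8*(1+c) powr (-\<alpha>)" by simp
  show ?thesis
  proof (cases "\<rho> \<le> s")
    case True
    have vs: "a * ((1-c)/2) \<le> a + s - m"
    proof -
      have rhs0: "0 \<le> s + \<rho>*(1+c)/2" using rho s c by simp
      have "m^2 \<le> (s + \<rho>*(1+c)/2)^2"
      proof -
        have eq: "(s + \<rho>*(1+c)/2)^2 - m^2 = \<rho> * (s*(1-c) - \<rho>*(1-c)*(3+c)/4)"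
          unfolding m(3) by (simp add: power2_eq_square field_simps)
        have le: "\<rho>*(1-c)*(3+c)/4 \<le> s*(1-c)"
        proof -
          have "\<rho>*(1-c)*((3+c)/4) \<le> \<rho>*(1-c)*1" using rho c by (intro mult_left_mono) auto
          then have "\<rho>*(1-c)*(3+c)/4 \<le> \<rho>*(1-c)" by simp
          also have "\<dots> \<le> s*(1-c)" using True c by (simp add: mult_right_mono)
          finally show ?thesis .
        qed
        have "0 \<le> \<rho> * (s*(1-c) - \<rho>*(1-c)*(3+c)/4)" using le rho by (intro mult_nonneg_nonneg) auto
        then show ?thesis using eq by linarith
      qed
      then have m1: "m \<le> s + \<rho>*(1+c)/2" by (rule power2_le_imp_le[OF _ rhs0])
      have m2: "0 \<le> (a-\<rho>) * (1+c)" using rho c by (intro mult_nonneg_nonneg) auto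
      have m1': "2*m \<le> 2 * s + \<rho> + \<rho>*c" using m1 by (simp add: field_simps)
      have m2': "0 \<le> a + a*c - \<rho> - \<rho>*c" using m2 by (simp add: algebra_simps)
      have "a - a*c \<le> 2*a + 2 * s - 2*m" using m1' m2' by linarith
      then show ?thesis by (simp add: field_simps)
    qed
    define lb where "lb = a * ((1-c)/2)"
    have lb0: "lb > 0" using a c by (simp add: lb_def)
    have "lb powr \<gamma> \<le> (a + s - m) powr \<gamma>" using vs lb0 g by (intro powr_mono2) (auto simp: lb_def)
    moreover have "0 \<le> (1-\<tau>)*(a+s+m) powr \<gamma>" using tau1 by simp
    ultimately have B: "lb powr \<gamma> \<le> (1-\<tau>)*(a+s+m) powr \<gamma> + (a+s-m) powr \<gamma>" by linarith
    have "?F \<le> (lb powr \<gamma>) powr (-\<alpha>)" using B lb0 al by (intro powr_mono2') auto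
    also have "\<dots> = a powr (-\<alpha>*\<gamma>) * ((1-c) powr (-\<alpha>*\<gamma>) * 2 powr (\<alpha>*\<gamma>))"
    proof -
      have "(lb powr \<gamma>) powr (-\<alpha>) = lb powr (-\<alpha>*\<gamma>)" by (simp add: powr_powr mult.commute)
      also have "\<dots> = a powr (-\<alpha>*\<gamma>) * ((1-c)/2) powr (-\<alpha>*\<gamma>)" unfolding lb_def by (rule powr_mult)
      also have "((1-c)/2) powr (-\<alpha>*\<gamma>) = (1-c) powr (-\<alpha>*\<gamma>) / 2 powr (-\<alpha>*\<gamma>)" by (rule powr_divide)
      also have "2 powr (-\<alpha>*\<gamma>) = inverse (2 powr (\<alpha>*\<gamma>))" using powr_minus[of 2 "\<alpha>*\<gamma>"] by simp
      finally show ?thesis by (simp add: divide_inverse)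
    qed
    also have "\<dots> \<le> a powr (-\<alpha>*\<gamma>) * ((1-c) powr (-\<alpha>*\<gamma>) * 2)"
    proof -
      have "2 powr (\<alpha>*\<gamma>) \<le> 2 powr 1" using al g by (intro powr_mono) (auto simp: mult_le_one)
      then show ?thesis using apos by (intro mult_left_mono) auto
    qed
    also have "\<dots> \<le> ?T" using apos by (intro mult_left_mono) auto
    finally show ?thesis .
  next
    case False
    have mpos: "m > 0" using False m by linarith
    have "(m - q) * (m + q) = \<rho>^2 * (1 - c^2)" using mq by (simp add: power2_eq_square algebra_simps)
    moreover have "(m - q) * (m + q) \<le> (m - q) * (2*m)" using qm by (intro mult_left_mono) auto
    ultimately have A1: "\<rho>^2 * (1 - c^2) \<le> (m - q) * (2*m)" by linarith
    have m2: "m^2 \<le> 4 * \<rho>^2"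
    proof -
      have "m \<le> 2*\<rho>" using m False by linarith
      then have "m^2 \<le> (2*\<rho>)^2" using m by (intro power_mono) auto
      then show ?thesis by (simp add: power_mult_distrib)
    qed
    have rpos: "\<rho> > 0" using False s by linarith
    have tl: "(1 - c^2)/8 \<le> 1 - \<tau>"
    proof -
      have e1: "1 - \<tau> = (m - q)/m" using tau mpos unfolding q_def by (simp add: field_simps)
      have e2: "(1 - c^2) * m \<le> 8 * (m - q)"
      proof -
        have "(1 - c^2) * m * \<rho>^2 = (\<rho>^2 * (1 - c^2)) * m" by (simp add: algebra_simps)
        also have "\<dots> \<le> (m - q) * (2*m) * m" using A1 mpos by (intro mult_right_mono) auto
        also have "\<dots> = 2 * (m - q) * m^2" by (simp add: power2_eq_square algebra_simps)
        also have "\<dots> \<le> 2 * (m - q) * (4 * \<rho>^2)" using m2 qm by (intro mult_left_mono) auto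
        finally have "(1 - c^2) * m * \<rho>^2 \<le> (8 * (m - q)) * \<rho>^2" by (simp add: algebra_simps)
        then show ?thesis using rpos by simp
      qed
      have "(1 - c^2)/8 * m \<le> m - q" using e2 by simp
      then have "(1 - c^2)/8 \<le> (m - q)/m" using mpos by (simp add: pos_le_divide_eq)
      then show ?thesis using e1 by simp
    qed
    define lb where "lb = (1 - c^2)/8 * a powr \<gamma>"
    have lb0: "lb > 0" using a c2 by (simp add: lb_def)
    have "(1 - c^2)/8 * a powr \<gamma> \<le> (1-\<tau>) * (a+s+m) powr \<gamma>"
    proof (rule mult_mono)
      show "a powr \<gamma> \<le> (a+s+m) powr \<gamma>" using us0 a g by (intro powr_mono2) auto
    qed (use tl tau1 in auto)
    moreover have "0 \<le> (a+s-m) powr \<gamma>" by simp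
    ultimately have B: "lb \<le> (1-\<tau>)*(a+s+m) powr \<gamma> + (a+s-m) powr \<gamma>" unfolding lb_def by linarith
    have "?F \<le> lb powr (-\<alpha>)" using B lb0 al by (intro powr_mono2') auto
    also have "\<dots> = a powr (-\<alpha>*\<gamma>) * ((1 - c^2) powr (-\<alpha>) * 8 powr \<alpha>)"
    proof -
      have "lb powr (-\<alpha>) = ((1 - c^2)/8) powr (-\<alpha>) * (a powr \<gamma>) powr (-\<alpha>)" unfolding lb_def by (rule powr_mult)
      also have "(a powr \<gamma>) powr (-\<alpha>) = a powr (-\<alpha>*\<gamma>)" by (simp add: powr_powr mult.commute)
      also have "((1 - c^2)/8) powr (-\<alpha>) = (1 - c^2) powr (-\<alpha>) / 8 powr (-\<alpha>)" by (rule powr_divide)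
      also have "8 powr (-\<alpha>) = inverse (8 powr \<alpha>)" by (rule powr_minus)
      finally show ?thesis by (simp add: divide_inverse mult.commute)
    qed
    also have "\<dots> \<le> a powr (-\<alpha>*\<gamma>) * (((1-c) powr (-\<alpha>) + (1+c) powr (-\<alpha>)) * 8)"
    proof -
      have e8: "8 powr \<alpha> \<le> 8" using powr_mono[of \<alpha> 1 8] al by simp
      have cc: "(1 - c^2) powr (-\<alpha>) \<le> (1-c) powr (-\<alpha>) + (1+c) powr (-\<alpha>)"
      proof (cases "c \<ge> 0")
        case True
        have "c*c \<le> c*1" using True c by (intro mult_left_mono) auto
        then have "1 - c \<le> 1 - c^2" by (simp add: power2_eq_square)
        then have "(1 - c^2) powr (-\<alpha>) \<le> (1-c) powr (-\<alpha>)" using c al by (intro powr_mono2') auto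
        then show ?thesis by (smt (verit) powr_ge_zero)
      next
        case False
        have "(-c)*(-c) \<le> (-c)*1" using False c by (intro mult_left_mono) auto
        then have "1 + c \<le> 1 - c^2" by (simp add: power2_eq_square)
        then have "(1 - c^2) powr (-\<alpha>) \<le> (1+c) powr (-\<alpha>)" using c al by (intro powr_mono2') auto
        then show ?thesis by (smt (verit) powr_ge_zero)
      qed
      show ?thesis using apos cc e8 by (intro mult_left_mono mult_mono) auto
    qed
    also have "\<dots> \<le> ?T" using apos by (intro mult_left_mono) (auto simp: algebra_simps)
    finally show ?thesis .
  qed
qed


lemma ennreal_lin3:
  fixes u v z :: real assumes "0 \<le> u" "0 \<le> v" "0 \<le> z"
  shows "ennreal (2 * u + 8 * v + 8 * z) = 2 * ennreal u + 8 * ennreal v + 8 * ennreal z"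
proof -
  have "ennreal (2 * u + 8 * v + 8 * z) = ennreal (2 * u) + ennreal (8 * v) + ennreal (8 * z)"
    using assms by (simp add: ennreal_plus)
  moreover have "ennreal (2 * u) = 2 * ennreal u" using assms ennreal_mult[of 2 u] by simp
  moreover have "ennreal (8 * v) = 8 * ennreal v" using assms ennreal_mult[of 8 v] by simp
  moreover have "ennreal (8 * z) = 8 * ennreal z" using assms ennreal_mult[of 8 z] by simp
  ultimately show ?thesis by simp
qed

lemma main_pw:
  fixes R \<gamma> \<alpha> t0 rt :: real and x0 e w :: "real^3"
  assumes g: "0 < \<gamma>" "\<gamma> < 1" and al: "0 \<le> \<alpha>" "\<alpha> < 1"
    and t0: "0 \<le> t0" "t0 + norm x0 \<le> R" "t0 < R" and rt: "0 \<le> rt" "rt \<le> t0"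
    and e: "norm e = 1" and x0e: "x0 = norm x0 *\<^sub>R e" and w: "norm w = 1"
  shows "ennreal (let t = t0 - rt;
                  x = x0 + rt *\<^sub>R w;
                  r = norm x;
                  \<omega> = (1 / r) *\<^sub>R x;
                  \<tau> = \<omega> \<bullet> w;
                  us = R - t + r;
                  vs = R - t - r
              in ((1 - \<tau>) * us powr \<gamma> + vs powr \<gamma>) powr (- \<alpha>))
     \<le> ennreal ((R - t0) powr (- \<alpha> * \<gamma>)) * (2 * J (\<alpha>*\<gamma>) e w + 8 * J \<alpha> e w + 8 * J \<alpha> (-e) w)"
proof -
  define a where "a = R - t0"
  define \<rho> where "\<rho> = norm x0"
  define c where "c = e \<bullet> w"
  define m where "m = norm (x0 + rt *\<^sub>R w)"
  define \<tau>0 where "\<tau>0 = (1/m) * (\<rho>*c + rt)"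
  have a: "0 < a" using t0 by (simp add: a_def)
  have rho: "0 \<le> \<rho>" "\<rho> \<le> a" using t0 by (auto simp: \<rho>_def a_def)
  have apos: "(R - t0) powr (- \<alpha> * \<gamma>) > 0" using a by (simp add: a_def)
  have "\<bar>c\<bar> \<le> 1" using Cauchy_Schwarz_ineq2[of e w] e w by (simp add: c_def)
  then have cb: "-1 \<le> c" "c \<le> 1" by auto
  show ?thesis
  proof (cases "c = 1 \<or> c = -1")
    case True
    then have "J (\<alpha>*\<gamma>) e w = \<infinity> \<or> J \<alpha> (-e) w = \<infinity>" by (auto simp: J_def c_def)
    then have S: "2 * J (\<alpha>*\<gamma>) e w + 8 * J \<alpha> e w + 8 * J \<alpha> (-e) w = \<infinity>"
      by (auto simp: ennreal_mult_eq_top_iff)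
    have "ennreal ((R - t0) powr (- \<alpha> * \<gamma>)) \<noteq> 0" using apos by simp
    then have "ennreal ((R - t0) powr (- \<alpha> * \<gamma>)) * (2 * J (\<alpha>*\<gamma>) e w + 8 * J \<alpha> e w + 8 * J \<alpha> (-e) w) = \<infinity>"
      unfolding S by simp
    then show ?thesis by simp
  next
    case False
    then have c: "-1 < c" "c < 1" using cb by auto
    have ee: "e \<bullet> e = 1" using e by (simp add: norm_eq_1)
    have ww: "w \<bullet> w = 1" using w by (simp add: norm_eq_1)
    have x0: "x0 = \<rho> *\<^sub>R e" using x0e by (simp add: \<rho>_def)
    have xw: "(x0 + rt *\<^sub>R w) \<bullet> w = \<rho>*c + rt"
      unfolding x0 by (simp add: inner_add_left ww c_def)
    have m2: "m^2 = \<rho>^2 + 2*rt*\<rho>*c + rt^2"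
    proof -
      have "m^2 = (x0 + rt *\<^sub>R w) \<bullet> (x0 + rt *\<^sub>R w)" by (simp add: m_def power2_norm_eq_inner)
      also have "\<dots> = \<rho>^2 + 2*rt*\<rho>*c + rt^2"
        unfolding x0 by (simp add: inner_add_left inner_add_right ee ww c_def inner_commute[of w e]
            power2_eq_square algebra_simps)
      finally show ?thesis .
    qed
    have mle: "m \<le> \<rho> + rt"
      using norm_triangle_ineq[of x0 "rt *\<^sub>R w"] w rt by (simp add: m_def \<rho>_def)
    have mge: "\<rho> - rt \<le> m"
      using norm_diff_ineq[of x0 "rt *\<^sub>R w"] w rt by (simp add: m_def \<rho>_def)
    have m0: "0 \<le> m" by (simp add: m_def)
    have R: "((1-\<tau>0)*(a+rt+m) powr \<gamma> + (a+rt-m) powr \<gamma>) powr (-\<alpha>)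
     \<le> a powr (-\<alpha>*\<gamma>) * (2*(1-c) powr (-\<alpha>*\<gamma>) + 8*(1-c) powr (-\<alpha>) + 8*(1+c) powr (-\<alpha>))"
      by (rule main_real[OF g al a rho rt(1) c m0 mle m2 mge \<tau>0_def])
    have F: "(let t = t0 - rt;
                  x = x0 + rt *\<^sub>R w;
                  r = norm x;
                  \<omega> = (1 / r) *\<^sub>R x;
                  \<tau> = \<omega> \<bullet> w;
                  us = R - t + r;
                  vs = R - t - r
              in ((1 - \<tau>) * us powr \<gamma> + vs powr \<gamma>) powr (- \<alpha>))
         = ((1-\<tau>0)*(a+rt+m) powr \<gamma> + (a+rt-m) powr \<gamma>) powr (-\<alpha>)"
    proof -
      have e1: "((1 / m) *\<^sub>R (x0 + rt *\<^sub>R w)) \<bullet> w = \<tau>0" by (simp add: \<tau>0_def xw)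
      have e2: "R - (t0 - rt) + m = a+rt+m" "R - (t0 - rt) - m = a+rt-m" by (simp_all add: a_def)
      show ?thesis unfolding Let_def m_def[symmetric] e1 e2 ..
    qed
    have J1: "J (\<alpha>*\<gamma>) e w = ennreal ((1-c) powr (-\<alpha>*\<gamma>))" using c by (simp add: J_def c_def)
    have J2: "J \<alpha> e w = ennreal ((1-c) powr (-\<alpha>))" using c by (simp add: J_def c_def)
    have J3: "J \<alpha> (-e) w = ennreal ((1+c) powr (-\<alpha>))" using c by (simp add: J_def c_def)
    have "ennreal (a powr (-\<alpha>*\<gamma>) * (2*(1-c) powr (-\<alpha>*\<gamma>) + 8*(1-c) powr (-\<alpha>) + 8*(1+c) powr (-\<alpha>)))
       = ennreal ((R - t0) powr (- \<alpha> * \<gamma>)) * (2 * J (\<alpha>*\<gamma>) e w + 8 * J \<alpha> e w + 8 * J \<alpha> (-e) w)"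
    proof -
      have L: "ennreal (2*(1-c) powr (-\<alpha>*\<gamma>) + 8*(1-c) powr (-\<alpha>) + 8*(1+c) powr (-\<alpha>))
          = 2 * ennreal ((1-c) powr (-\<alpha>*\<gamma>)) + 8 * ennreal ((1-c) powr (-\<alpha>)) + 8 * ennreal ((1+c) powr (-\<alpha>))"
        by (rule ennreal_lin3) auto
      have M: "ennreal (a powr (-\<alpha>*\<gamma>) * (2*(1-c) powr (-\<alpha>*\<gamma>) + 8*(1-c) powr (-\<alpha>) + 8*(1+c) powr (-\<alpha>)))
          = ennreal (a powr (-\<alpha>*\<gamma>)) * ennreal (2*(1-c) powr (-\<alpha>*\<gamma>) + 8*(1-c) powr (-\<alpha>) + 8*(1+c) powr (-\<alpha>))"
        by (rule ennreal_mult) auto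
      have Ra: "R - t0 = a" by (simp add: a_def)
      show ?thesis unfolding J1 J2 J3 Ra M L ..
    qed
    then show ?thesis unfolding F using R by (metis ennreal_leI)
  qed
qed


lemma J_meas_S2[measurable]: "J p e \<in> borel_measurable S2_measure"
  unfolding S2_measure_def by simp

lemma AE_S2: "AE w in S2_measure. norm w = 1"
  unfolding S2_measure_def
proof (subst AE_distr_iff)
  show "(\<lambda>p. sph (fst p) (snd p)) \<in> measurable (density (lborel \<Otimes>\<^sub>M lborel)
        (\<lambda>p. indicator ({0..pi} \<times> {0..2*pi}) p * ennreal (sin (fst p)))) borel"
    by simp
  show "{x \<in> space borel. norm (x::real^3) = 1} \<in> sets borel" by measurable
  show "AE x in density (lborel \<Otimes>\<^sub>M lborel) (\<lambda>p. indicator ({0..pi} \<times> {0..2*pi}) p * ennreal (sin (fst p))).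
      norm (sph (fst x) (snd x)) = 1"
    by (simp add: sph_norm)
qed

theorem lemma5p2:
  fixes R \<gamma> \<alpha> :: real
  assumes "R > 1" and "0 < \<gamma>" and "\<gamma> < 1" and "0 \<le> \<alpha>" and "\<alpha> < 1"
  shows "\<exists>C::real. \<forall>(t0::real) (x0::real^3) (rt::real).
           0 \<le> t0 \<longrightarrow> t0 + norm x0 \<le> R \<longrightarrow> t0 < R \<longrightarrow>
           0 \<le> rt \<longrightarrow> rt \<le> t0 \<longrightarrow>
           (\<integral>\<^sup>+ w. ennreal (
              let t = t0 - rt;
                  x = x0 + rt *\<^sub>R w;
                  r = norm x;
                  \<omega> = (1 / r) *\<^sub>R x;
                  \<tau> = \<omega> \<bullet> w;
                  us = R - t + r;
                  vs = R - t - r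
              in ((1 - \<tau>) * us powr \<gamma> + vs powr \<gamma>) powr (- \<alpha>)) \<partial>S2_measure)
           \<le> ennreal (C * (R - t0) powr (- \<alpha> * \<gamma>))"
proof -
  have g: "0 < \<gamma>" "\<gamma> < 1" and al: "0 \<le> \<alpha>" "\<alpha> < 1" using assms by auto
  define K where "K = (\<lambda>p::real. 256 * (2 * (pi powr (1-p) / (1-p))) * (3 * (2 * ((4*pi) powr (1-p) / (1-p)))))"
  have p1: "0 \<le> \<alpha>*\<gamma>" "\<alpha>*\<gamma> < 1"
  proof -
    show "0 \<le> \<alpha>*\<gamma>" using g al by simp
    have "\<alpha>*\<gamma> \<le> \<alpha>*1" using g al by (intro mult_left_mono) auto
    then show "\<alpha>*\<gamma> < 1" using al by simp
  qed
  have K0: "0 \<le> K p" if "p < 1" for p using that by (simp add: K_def)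
  show ?thesis
  proof (intro exI[of _ "2 * K (\<alpha>*\<gamma>) + 16 * K \<alpha>"] allI impI)
    fix t0 rt :: real and x0 :: "real^3"
    assume t0: "0 \<le> t0" "t0 + norm x0 \<le> R" "t0 < R" and rt: "0 \<le> rt" "rt \<le> t0"
    define e where "e = (if x0 = 0 then sph 0 0 else (1 / norm x0) *\<^sub>R x0)"
    have e: "norm e = 1" by (simp add: e_def sph_norm)
    have x0e: "x0 = norm x0 *\<^sub>R e" by (simp add: e_def)
    define A where "A = (R - t0) powr (- \<alpha> * \<gamma>)"
    have A0: "0 \<le> A" by (simp add: A_def)
    have "(\<integral>\<^sup>+ w. ennreal (
              let t = t0 - rt;
                  x = x0 + rt *\<^sub>R w;
                  r = norm x;
                  \<omega> = (1 / r) *\<^sub>R x;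
                  \<tau> = \<omega> \<bullet> w;
                  us = R - t + r;
                  vs = R - t - r
              in ((1 - \<tau>) * us powr \<gamma> + vs powr \<gamma>) powr (- \<alpha>)) \<partial>S2_measure)
        \<le> (\<integral>\<^sup>+ w. ennreal A * (2 * J (\<alpha>*\<gamma>) e w + 8 * J \<alpha> e w + 8 * J \<alpha> (-e) w) \<partial>S2_measure)"
      using AE_S2
    proof (rule nn_integral_mono_AE[OF AE_mp], intro AE_I2 impI)
      fix w :: "real^3" assume w: "norm w = 1"
      show "ennreal (
              let t = t0 - rt;
                  x = x0 + rt *\<^sub>R w;
                  r = norm x;
                  \<omega> = (1 / r) *\<^sub>R x;
                  \<tau> = \<omega> \<bullet> w;
                  us = R - t + r;
                  vs = R - t - r
              in ((1 - \<tau>) * us powr \<gamma> + vs powr \<gamma>) powr (- \<alpha>))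
        \<le> ennreal A * (2 * J (\<alpha>*\<gamma>) e w + 8 * J \<alpha> e w + 8 * J \<alpha> (-e) w)"
        unfolding A_def by (rule main_pw[OF g al t0 rt e x0e w])
    qed
    also have "\<dots> = ennreal A * (2 * (\<integral>\<^sup>+ w. J (\<alpha>*\<gamma>) e w \<partial>S2_measure) + 8 * (\<integral>\<^sup>+ w. J \<alpha> e w \<partial>S2_measure)
        + 8 * (\<integral>\<^sup>+ w. J \<alpha> (-e) w \<partial>S2_measure))"
      by (simp add: nn_integral_cmult nn_integral_add)
    also have "\<dots> \<le> ennreal A * (2 * ennreal (K (\<alpha>*\<gamma>)) + 8 * ennreal (K \<alpha>) + 8 * ennreal (K \<alpha>))"
      unfolding K_def
      by (intro mult_left_mono add_mono sphere_int p1 al e) (auto simp: norm_minus_cancel e)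
    also have "\<dots> = ennreal ((2 * K (\<alpha>*\<gamma>) + 16 * K \<alpha>) * A)"
    proof -
      have "2 * ennreal (K (\<alpha>*\<gamma>)) + 8 * ennreal (K \<alpha>) + 8 * ennreal (K \<alpha>) = ennreal (2 * K (\<alpha>*\<gamma>) + 8 * K \<alpha> + 8 * K \<alpha>)"
        by (rule ennreal_lin3[symmetric]) (use K0 p1 al in auto)
      moreover have "ennreal A * ennreal (2 * K (\<alpha>*\<gamma>) + 8 * K \<alpha> + 8 * K \<alpha>) = ennreal (A * (2 * K (\<alpha>*\<gamma>) + 8 * K \<alpha> + 8 * K \<alpha>))"
        by (rule ennreal_mult[symmetric]) (use A0 K0 p1 al in auto)
      ultimately show ?thesis by (simp add: algebra_simps)
    qed
    finally show "(\<integral>\<^sup>+ w. ennreal (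
              let t = t0 - rt;
                  x = x0 + rt *\<^sub>R w;
                  r = norm x;
                  \<omega> = (1 / r) *\<^sub>R x;
                  \<tau> = \<omega> \<bullet> w;
                  us = R - t + r;
                  vs = R - t - r
              in ((1 - \<tau>) * us powr \<gamma> + vs powr \<gamma>) powr (- \<alpha>)) \<partial>S2_measure)
           \<le> ennreal ((2 * K (\<alpha>*\<gamma>) + 16 * K \<alpha>) * (R - t0) powr (- \<alpha> * \<gamma>))"
      unfolding A_def .
  qed
qed


end
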